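(* For every $(\overline{u}_{T,k+1/2})_{k=1}^4\in\mathbb{R}^4$, the matrix $\boldsymbol{A}$ is a nonsingular M-matrix (in particular strictly diagonally dominant, with $\boldsymbol{A}^{-1}$ entrywise nonnegative), and the matrix $\boldsymbol{C}:=\boldsymbol{A}^{-1}\boldsymbol{B}$ is entrywise nonnegative and satisfies $\sum_{j=1}^4 c_{ij}=1$ for every $i\in\{1,\dots,4\}$.
   Context: Indices in $\{1,2,3,4\}$ are taken cyclically mod 4. Limiter: $\varphi(r)=\dfrac{r^4+r^3+r^2+r}{r^4+r^3+r^2+r+1}$ for $r\ge0$. Given total velocities $\overline{u}_{T,k+1/2}\in\mathbb{R}$, $k=1,\dots,4$, define $\overline{\omega}^V_{k+1/2}=\varphi(\max(0,\overline{u}_{T,k-1/2}/\overline{u}_{T,k+1/2}))$ if $\overline{u}_{T,k+1/2}>0$, $=\varphi(\max(0,\overline{u}_{T,k+3/2}/\overline{u}_{T,k+1/2}))$ if $\overline{u}_{T,k+1/2}<0$, and $=0$ if $\overline{u}_{T,k+1/2}=0$. The $4\times4$ matrix $\boldsymbol{A}=(a_{ij})$ has $a_{kk}=1$, $a_{k,k-1}=-\overline{\omega}^V_{k+1/2}$ if $\overline{u}_{T,k+1/2}\ge0$ (else $0$), $a_{k,k+1}=-\overline{\omega}^V_{k+1/2}$ if $\overline{u}_{T,k+1/2}<0$ (else $0$), and all other entries $0$. The $4\times4$ matrix $\boldsymbol{B}=(b_{ij})$ has $b_{kk}=1-\overline{\omega}^V_{k+1/2}$ if $\overline{u}_{T,k+1/2}\ge0$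 (else $0$), $b_{k,k+1}=1-\overline{\omega}^V_{k+1/2}$ if $\overline{u}_{T,k+1/2}<0$ (else $0$), and all other entries $0$. *)

theory Defs
  imports "HOL-Analysis.Analysis"
begin

text \<open>Indices 1..4 taken cyclically mod 4 are represented by the finite ring type 4
  (elements 0,1,2,3 = residues mod 4; paper index 4 corresponds to 0).
  The vector u :: real^4 has u$k = u_{T,k+1/2}; so u_{T,k-1/2} = u$(k-1)
  and u_{T,k+3/2} = u$(k+1), with cyclic arithmetic in type 4.\<close>

definition phi :: "real \<Rightarrow> real" where
  "phi r = (r^4 + r^3 + r^2 + r) / (r^4 + r^3 + r^2 + r + 1)"

definition omegaV :: "real^4 \<Rightarrow> 4 \<Rightarrow> real" where
  "omegaV u k =
     (if u$k > 0 then phi (max 0 (u$(k-1) / u$k))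
      else if u$k < 0 then phi (max 0 (u$(k+1) / u$k))
      else 0)"

definition matA :: "real^4 \<Rightarrow> real^4^4" where
  "matA u = (\<chi> k j. if j = k then 1
                     else if u$k \<ge> 0 \<and> j = k - 1 then - omegaV u k
                     else if u$k < 0 \<and> j = k + 1 then - omegaV u k
                     else 0)"

definition matB :: "real^4 \<Rightarrow> real^4^4" where
  "matB u = (\<chi> k j. if u$k \<ge> 0 then (if j = k then 1 - omegaV u k else 0)
                     else (if j = k + 1 then 1 - omegaV u k else 0))"

text \<open>Nonsingular M-matrix: a Z-matrix (nonpositive off-diagonal entries) which is
  invertible with entrywise nonnegative inverse (a standard equivalent definition,
  Berman--Plemmons).\<close>
definition nonsingular_M_matrix :: "real^'n^'n \<Rightarrow> bool" where
  "nonsingular_M_matrix M \<longleftrightarrow>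
     (\<forall>i j. i \<noteq> j \<longrightarrow> M$i$j \<le> 0) \<and> invertible M \<and> (\<forall>i j. matrix_inv M $i$j \<ge> 0)"

definition strictly_diag_dominant :: "real^'n^'n \<Rightarrow> bool" where
  "strictly_diag_dominant M \<longleftrightarrow>
     (\<forall>i. (\<Sum>j\<in>UNIV - {i}. \<bar>M$i$j\<bar>) < \<bar>M$i$i\<bar>)"

end

theory Submission
  imports Defs
begin

lemma phi_bounds: "0 \<le> r \<Longrightarrow> 0 \<le> phi r \<and> phi r < 1"
proof -
  assume r: "0 \<le> r"
  have "0 \<le> r^4 + r^3 + r^2 + r" using r by simp
  then show ?thesis unfolding phi_def by (auto simp: divide_simps)
qed

lemma omega_bounds: "0 \<le> omegaV u k \<and> omegaV u k < 1"
  unfolding omegaV_def using phi_bounds by auto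

definition sig :: "real^4 \<Rightarrow> 4 \<Rightarrow> 4" where
  "sig u k = (if u$k \<ge> 0 then k - 1 else k + 1)"

lemma sig_neq: "sig u k \<noteq> k"
  unfolding sig_def by (cases k) auto

lemma matA_eq: "matA u $ k $ j = (if j = k then 1 else if j = sig u k then - omegaV u k else 0)"
  unfolding matA_def sig_def by auto

lemma matA_mult: "(matA u *v x) $ k = x$k - omegaV u k * x$(sig u k)"
proof -
  have "(matA u *v x) $ k = (\<Sum>j\<in>UNIV. (if j = k then 1 else if j = sig u k then - omegaV u k else 0) * x$j)"
    by (simp add: matrix_vector_mult_def matA_eq)
  also have "\<dots> = (\<Sum>j\<in>UNIV. (if j = k then x$j else 0) + (if j = sig u k then - omegaV u k * x$j else 0))"
    using sig_neq[of u k] by (intro sum.cong) auto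
  also have "\<dots> = x$k - omegaV u k * x$(sig u k)"
    by (simp add: sum.distrib)
  finally show ?thesis .
qed

lemma matB_row: "(\<Sum>j\<in>UNIV. matB u $ k $ j) = 1 - omegaV u k"
proof -
  have "matB u $ k = (\<chi> j. if j = (if 0 \<le> u$k then k else k+1) then 1 - omegaV u k else 0)"
    unfolding matB_def by (simp add: vec_eq_iff)
  then show ?thesis by simp
qed

lemma matA_row: "(\<Sum>j\<in>UNIV. matA u $ k $ j) = 1 - omegaV u k"
proof -
  have "(matA u *v (\<chi> j. 1)) $ k = 1 - omegaV u k" by (simp only: matA_mult vec_lambda_beta)
  moreover have "(matA u *v (\<chi> j. 1)) $ k = (\<Sum>j\<in>UNIV. matA u $ k $ j)"
    unfolding matrix_vector_mult_def by simp
  ultimately show ?thesis by simp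
qed

lemma monotone:
  assumes "\<forall>k. (matA u *v x) $ k \<ge> 0"
  shows "x $ i \<ge> 0"
proof (rule ccontr)
  assume "\<not> x $ i \<ge> 0"
  define m where "m = Min (range (\<lambda>j. x$j))"
  have fin: "finite (range (\<lambda>j::4. x$j))" by simp
  obtain k where k: "x$k = m" using Min_in[OF fin] m_def by (metis (no_types, lifting) UNIV_not_empty empty_is_image imageE)
  have mle: "\<And>j. m \<le> x$j" unfolding m_def using fin by simp
  have "m < 0" using mle[of i] \<open>\<not> x $ i \<ge> 0\<close> by simp
  have "0 \<le> x$k - omegaV u k * x$(sig u k)" using assms matA_mult by metis
  moreover have "omegaV u k * m \<le> omegaV u k * x$(sig u k)"
    using mle omega_bounds by (simp add: mult_left_mono)
  ultimately have "(1 - omegaV u k) * m \<ge> 0" using k by (simp add: algebra_simps)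
  moreover have "1 - omegaV u k > 0" using omega_bounds[of u k] by simp
  ultimately show False using \<open>m < 0\<close> mult_pos_neg[of "1 - omegaV u k" m] by linarith
qed

lemma invA: "invertible (matA u)"
proof -
  have "\<forall>x. matA u *v x = 0 \<longrightarrow> x = 0"
  proof (intro allI impI)
    fix x assume h: "matA u *v x = 0"
    have z: "x$k - omegaV u k * x$(sig u k) = 0" for k using h matA_mult[of u x k] by simp
    have p: "x$i \<ge> 0" for i using monotone[of u x i] h by simp
    have z2: "(matA u *v (-x))$k = 0" for k
      unfolding matA_mult using z[of k] by simp
    have "(-x)$i \<ge> 0" for i by (rule monotone[of u]) (simp add: z2)
    with p show "x = 0" by (simp add: vec_eq_iff) (meson antisym neg_le_0_iff_le)
  qed
  then show ?thesis by (simp add: invertible_left_inverse matrix_left_invertible_ker)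
qed

lemma inv_right: "matA u ** matrix_inv (matA u) = mat 1"
  and inv_left: "matrix_inv (matA u) ** matA u = mat 1"
proof -
  have "\<exists>A'. matA u ** A' = mat 1 \<and> A' ** matA u = mat 1"
    using invA unfolding invertible_def by blast
  then have "matA u ** matrix_inv (matA u) = mat 1 \<and> matrix_inv (matA u) ** matA u = mat 1"
    unfolding matrix_inv_def by (rule someI_ex)
  then show "matA u ** matrix_inv (matA u) = mat 1" "matrix_inv (matA u) ** matA u = mat 1" by auto
qed

lemma inv_nonneg: "matrix_inv (matA u) $ i $ j \<ge> 0"
proof -
  let ?x = "matrix_inv (matA u) *v axis j 1"
  have "matA u *v ?x = axis j 1"
    by (simp add: matrix_vector_mul_assoc inv_right)
  then have "\<forall>k. (matA u *v ?x) $ k \<ge> 0" by (simp add: axis_def)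
  then have "?x $ i \<ge> 0" by (rule monotone)
  moreover have "?x $ i = matrix_inv (matA u) $ i $ j"
    by (simp add: matrix_vector_mult_def axis_def if_distrib cong: if_cong)
  ultimately show ?thesis by simp
qed

lemma matB_nonneg: "matB u $ i $ j \<ge> 0"
  unfolding matB_def using omega_bounds[of u i] by auto

theorem mainTheorem2:
  fixes u :: "real^4"
  defines "C \<equiv> matrix_inv (matA u) ** matB u"
  shows "nonsingular_M_matrix (matA u) \<and> strictly_diag_dominant (matA u)
         \<and> (\<forall>i j. matrix_inv (matA u) $ i $ j \<ge> 0)
         \<and> (\<forall>i j. C $ i $ j \<ge> 0)
         \<and> (\<forall>i. (\<Sum>j\<in>UNIV. C $ i $ j) = 1)"
proof (intro conjI allI)
  show "nonsingular_M_matrix (matA u)"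
    unfolding nonsingular_M_matrix_def
    using invA inv_nonneg omega_bounds by (auto simp: matA_eq)
  show "strictly_diag_dominant (matA u)"
    unfolding strictly_diag_dominant_def
  proof
    fix i
    have "(\<Sum>j\<in>UNIV - {i}. \<bar>matA u$i$j\<bar>) = (\<Sum>j\<in>UNIV - {i}. if j = sig u i then omegaV u i else 0)"
      using omega_bounds[of u i] by (intro sum.cong) (auto simp: matA_eq)
    also have "\<dots> = omegaV u i" using sig_neq[of u i] by (simp add: sum.delta)
    finally show "(\<Sum>j\<in>UNIV - {i}. \<bar>matA u$i$j\<bar>) < \<bar>matA u$i$i\<bar>"
      using omega_bounds[of u i] by (simp add: matA_eq)
  qed
  fix i
  show "\<And>j. matrix_inv (matA u) $ i $ j \<ge> 0" by (rule inv_nonneg)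
  show "\<And>j. C $ i $ j \<ge> 0"
    unfolding C_def matrix_matrix_mult_def
    using inv_nonneg matB_nonneg by (simp add: sum_nonneg)
  have one: "(\<Sum>j\<in>UNIV. M $ i $ j) = (M *v (\<chi> j. 1)) $ i" for M :: "real^4^4"
    by (simp add: matrix_vector_mult_def)
  have "matB u *v (\<chi> j. 1) = matA u *v (\<chi> j. 1)"
    using matA_row matB_row by (simp add: vec_eq_iff matrix_vector_mult_def)
  then have "C *v (\<chi> j. 1) = (matrix_inv (matA u) ** matA u) *v (\<chi> j. 1)"
    unfolding C_def by (simp only: matrix_vector_mul_assoc[symmetric])
  then have "C *v (\<chi> j. 1) = (\<chi> j. 1)" by (simp add: inv_left)
  then show "(\<Sum>j\<in>UNIV. C $ i $ j) = 1" by (simp add: one)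
qed

end
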